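(* Let $n\ge1$, $\varepsilon\in D$, $s\in D^n$, and let $n'$ be the index produced by the recursive construction below. Then $L_n=n'+1-L_{n'}$ (with the convention $L_{-1}=0$).
   Context: Let $D$ be a commutative integral domain with $1\neq 0$. For $s=(s_1,\dots,s_n)\in D^n$ put $\underline{s}=s_1x^{-1}+\cdots+s_nx^{-n}\in D[x,x^{-1}]$; for a Laurent polynomial $F$, $F_k$ is the coefficient of $x^k$; $s^{(i)}=(s_1,\dots,s_i)$. A polynomial $f\in D[x]$ is an annihilator of $s$ if $f=0$, or $d=\deg f\ge0$ and $(f\cdot\underline{s})_{d-j}=0$ for $d+1\le j\le n$. $L(s)$ is the least degree of a nonzero annihilator of $s$, $L_j=L(s^{(j)})$, $L_0=0$. For nonzero $f\in D[x]$ and $t\in D^m$, $\Delta(f,t)=(f\cdot\underline{t})_{\deg f-m}$. Recursive construction (relative to a fixed $\varepsilon\in D$): put $\mu^{(-1)}=\varepsilon$, $\mu^{(0)}=1$, $\Delta_0=1$, $0'=-1$, and for $j\ge 0$ let $e_j=j+1-2\deg\mu^{(j)}$ (so $e_0=1$). For $j=1,\dots,n$ successively define: $\Delta_j=\Delta(\mu^{(j-1)},s^{(j)})$; the index $j'=(j-1)'$ if $\Delta_j=0$ or $e_{j-1}\le 0$, and $j'=j-1$ if $\Delta_j\neq0$ and $e_{j-1}>0$; $\Delta'_j=\Delta_{(j-1)'+1}$; and $\mu^{(j)}=\mu^{(j-1)}$ if $\Delta_j=0$, otherwise $\mu^{(j)}=\Delta'_j\,x^{\max\{e_{j-1},0\}}\mu^{(j-1)}-\Delta_j\,x^{\max\{-e_{j-1},0\}}\mu^{((j-1)')}$.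 *)

theory Defs
  imports "HOL-Computational_Algebra.Polynomial"
begin

text \<open>A sequence s = (s_1,...,s_m) in D^m is represented by a function
  s :: nat => 'a together with its length m; only s 1, ..., s m are used.
  Hence the prefix s^(i) is represented by the same function with length i.\<close>

text \<open>Coefficient of x^k in the Laurent polynomial f * (s_1 x^-1 + ... + s_m x^-m).\<close>
definition lcoeff :: "'a::idom poly \<Rightarrow> (nat \<Rightarrow> 'a) \<Rightarrow> nat \<Rightarrow> int \<Rightarrow> 'a" where
  "lcoeff f s m k = (\<Sum>i\<in>{0..degree f}. \<Sum>l\<in>{1..m}.
       if int i - int l = k then coeff f i * s l else 0)"

definition annihilator :: "'a::idom poly \<Rightarrow> (nat \<Rightarrow> 'a) \<Rightarrow> nat \<Rightarrow> bool" where
  "annihilator f s m \<longleftrightarrow> f = 0 \<or>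
     (\<forall>j. degree f + 1 \<le> j \<and> j \<le> m \<longrightarrow> lcoeff f s m (int (degree f) - int j) = 0)"

definition LC :: "(nat \<Rightarrow> 'a::idom) \<Rightarrow> nat \<Rightarrow> nat" where
  "LC s m = (LEAST d. \<exists>f. f \<noteq> 0 \<and> degree f = d \<and> annihilator f s m)"

definition Delta :: "'a::idom poly \<Rightarrow> (nat \<Rightarrow> 'a) \<Rightarrow> nat \<Rightarrow> 'a" where
  "Delta f s m = lcoeff f s m (int (degree f) - int m)"

text \<open>State after step j of the recursive construction:
  (mu^(j), j', mu^(j'), Delta_{j'+1}).  Initial state j = 0:
  (mu^(0) = 1, 0' = -1, mu^(-1) = eps, Delta_0 = 1).\<close>
fun lfsr_state :: "'a::idom \<Rightarrow> (nat \<Rightarrow> 'a) \<Rightarrow> nat \<Rightarrow> 'a poly \<times> int \<times> 'a poly \<times> 'a" where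
  "lfsr_state eps s 0 = (1, -1, [:eps:], 1)"
| "lfsr_state eps s (Suc j) =
    (let (mu, jp, mujp, dp) = lfsr_state eps s j;
         \<Delta> = Delta mu s (Suc j);
         e = int (Suc j) - 2 * int (degree mu);
         keep = (\<Delta> = 0 \<or> e \<le> 0);
         mu' = (if \<Delta> = 0 then mu
                else smult dp (monom 1 (nat (max e 0)) * mu)
                     - smult \<Delta> (monom 1 (nat (max (- e) 0)) * mujp))
     in (mu', (if keep then jp else int j), (if keep then mujp else mu),
         (if keep then dp else \<Delta>)))"

definition mu :: "'a::idom \<Rightarrow> (nat \<Rightarrow> 'a) \<Rightarrow> nat \<Rightarrow> 'a poly" where
  "mu eps s j = fst (lfsr_state eps s j)"

definition jprime :: "'a::idom \<Rightarrow> (nat \<Rightarrow> 'a) \<Rightarrow> nat \<Rightarrow> int" where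
  "jprime eps s j = fst (snd (lfsr_state eps s j))"

definition LCi :: "(nat \<Rightarrow> 'a::idom) \<Rightarrow> int \<Rightarrow> int" where
  "LCi s k = (if k < 0 then 0 else int (LC s (nat k)))"

end

theory Submission
  imports Defs
begin

lemma inner_delta:
  "(\<Sum>l\<in>{1..m}. if int i - int l = k then c * s l else (0::'a::idom)) =
   (if 1 \<le> int i - k \<and> int i - k \<le> int m then c * s (nat (int i - k)) else 0)"
proof -
  have "(\<Sum>l\<in>{1..m}. if int i - int l = k then c * s l else (0::'a)) =
        (\<Sum>l\<in>{1..m}. if l = nat (int i - k) then (if 0 \<le> int i - k then c * s l else 0) else 0)"
    by (rule sum.cong) auto
  also have "\<dots> = (if nat (int i - k) \<in> {1..m} then (if 0 \<le> int i - k then c * s (nat (int i - k)) else 0) else 0)"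
    by (simp add: sum.delta)
  also have "\<dots> = (if 1 \<le> int i - k \<and> int i - k \<le> int m then c * s (nat (int i - k)) else 0)"
    by auto
  finally show ?thesis .
qed

lemma lcoeff_alt: "lcoeff f s m k = (\<Sum>i\<in>{0..degree f}.
   if 1 \<le> int i - k \<and> int i - k \<le> int m then coeff f i * s (nat (int i - k)) else 0)"
  unfolding lcoeff_def by (rule sum.cong[OF refl], rule inner_delta)

definition G :: "'a::idom poly \<Rightarrow> (nat \<Rightarrow> 'a) \<Rightarrow> nat \<Rightarrow> int \<Rightarrow> nat \<Rightarrow> 'a" where
  "G f s m k N = (\<Sum>i\<in>{0..N}.
   if 1 \<le> int i - k \<and> int i - k \<le> int m then coeff f i * s (nat (int i - k)) else 0)"

lemma lcoeff_G: "degree f \<le> N \<Longrightarrow> lcoeff f s m k = G f s m k N"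
  unfolding lcoeff_alt G_def
  by (rule sum.mono_neutral_left) (auto simp: coeff_eq_0)

lemma lcoeff_diff: "lcoeff (f - g) s m k = lcoeff f s m k - lcoeff g s m k"
proof -
  let ?N = "max (degree f) (degree g)"
  have d: "degree (f - g) \<le> ?N" by (simp add: degree_diff_le_max)
  have e1: "lcoeff f s m k = G f s m k ?N" by (rule lcoeff_G) simp
  have e2: "lcoeff g s m k = G g s m k ?N" by (rule lcoeff_G) simp
  show ?thesis
    unfolding lcoeff_G[OF d] e1 e2 G_def
    by (simp add: sum_subtractf[symmetric] algebra_simps if_distrib cong: if_cong)
qed

lemma lcoeff_smult: "lcoeff (smult c f) s m k = c * lcoeff f s m k"
proof -
  have d: "degree (smult c f) \<le> degree f" by simp
  have e1: "lcoeff f s m k = G f s m k (degree f)" by (rule lcoeff_G) simp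
  show ?thesis
    unfolding lcoeff_G[OF d] e1 G_def
    by (simp add: sum_distrib_left algebra_simps if_distrib cong: if_cong)
qed

lemma lcoeff_shift: "lcoeff (monom 1 t * f) s m k = lcoeff f s m (k - int t)"
proof -
  have d: "degree (monom 1 t * f) \<le> degree f + t"
    by (metis add.commute degree_monom_le degree_mult_le le_refl add_le_mono order_trans)
  define h where "h i = (if 1 \<le> int i - k \<and> int i - k \<le> int m then coeff (monom 1 t * f) i * s (nat (int i - k)) else 0)" for i
  have "lcoeff (monom 1 t * f) s m k = sum h {0..degree f + t}"
    unfolding lcoeff_G[OF d] G_def h_def ..
  also have "\<dots> = sum h {t..degree f + t}"
    by (rule sum.mono_neutral_right) (auto simp: h_def coeff_monom_mult)
  also have "\<dots> = sum (\<lambda>i. h (i + t)) {0..degree f}"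
    using sum.shift_bounds_cl_nat_ivl[of h 0 t "degree f"] by simp
  also have "\<dots> = lcoeff f s m (k - int t)"
  proof -
    have cm: "coeff (monom 1 t * f) (i + t) = coeff f i" for i
      by (simp only: coeff_monom_mult) simp
    show ?thesis unfolding lcoeff_alt h_def cm
      by (rule sum.cong) (auto simp: algebra_simps)
  qed
  finally show ?thesis .
qed

lemma lcoeff_mindep:
  assumes "int (degree f) - x \<le> int m" "m \<le> m'"
  shows "lcoeff f s m x = lcoeff f s m' x"
  unfolding lcoeff_alt using assms by (intro sum.cong) auto

lemma disc_eq:
  assumes "degree f < k" "k \<le> m"
  shows "lcoeff f s m (int (degree f) - int k) = (\<Sum>i\<le>degree f. coeff f i * s (i + k - degree f))"
proof -
  have "nat (int x - (int (degree f) - int k)) = x + k - degree f" for x using assms by auto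
  then show ?thesis unfolding lcoeff_alt using assms
    by (intro sum.cong) (auto simp: atLeast0AtMost)
qed

lemma LC_le: "f \<noteq> 0 \<Longrightarrow> annihilator f s m \<Longrightarrow> LC s m \<le> degree f"
  unfolding LC_def by (rule Least_le) blast

lemma LC_ex: "\<exists>f. f \<noteq> 0 \<and> degree f = LC s m \<and> annihilator f s m"
proof -
  have "monom (1::'a) m \<noteq> 0 \<and> degree (monom (1::'a) m) = m \<and> annihilator (monom 1 m) s m"
    by (auto simp: annihilator_def degree_monom_eq)
  then have "\<exists>d f. f \<noteq> 0 \<and> degree f = d \<and> annihilator f s m" by blast
  then show ?thesis unfolding LC_def by (rule LeastI_ex)
qed

lemma annih_mono:
  assumes "annihilator f s m'" "m \<le> m'"
  shows "annihilator f s m"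
  unfolding annihilator_def
proof (cases "f = 0")
  case False
  show "f = 0 \<or> (\<forall>j. degree f + 1 \<le> j \<and> j \<le> m \<longrightarrow> lcoeff f s m (int (degree f) - int j) = 0)"
  proof (rule disjI2, intro allI impI)
    fix j assume j: "degree f + 1 \<le> j \<and> j \<le> m"
    have "lcoeff f s m (int (degree f) - int j) = lcoeff f s m' (int (degree f) - int j)"
      by (rule lcoeff_mindep) (use j assms in auto)
    also have "\<dots> = 0" using assms False j unfolding annihilator_def by auto
    finally show "lcoeff f s m (int (degree f) - int j) = 0" .
  qed
qed simp

lemma massey:
  assumes f: "annihilator f s M" "Delta f s (Suc M) \<noteq> 0"
    and g: "annihilator g s (Suc M)" "g \<noteq> 0"
  shows "Suc M \<le> degree f + degree g"
proof (rule ccontr)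
  assume "\<not> ?thesis"
  then have lt: "degree f + degree g < Suc M" by simp
  define d where "d = degree f"
  define e where "e = degree g"
  have fz: "f \<noteq> 0" using f(2) unfolding Delta_def lcoeff_def by auto
  have Df: "Delta f s (Suc M) = (\<Sum>a\<le>d. coeff f a * s (a + Suc M - d))"
    unfolding Delta_def d_def by (rule disc_eq) (use lt in auto)
  have A: "(\<Sum>b\<le>e. coeff g b * s (b + (a + Suc M - d) - e)) = 0" if "a \<le> d" for a
  proof -
    have H: "\<forall>j. e + 1 \<le> j \<and> j \<le> Suc M \<longrightarrow> lcoeff g s (Suc M) (int e - int j) = 0"
      using g unfolding annihilator_def e_def by auto
    have "lcoeff g s (Suc M) (int e - int (a + Suc M - d)) = 0"
      by (rule H[rule_format]) (use that lt d_def e_def in auto)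
    moreover have "lcoeff g s (Suc M) (int e - int (a + Suc M - d)) =
        (\<Sum>b\<le>e. coeff g b * s (b + (a + Suc M - d) - e))"
      unfolding e_def by (rule disc_eq) (use lt that d_def in auto)
    ultimately show ?thesis by simp
  qed
  have B: "(\<Sum>a\<le>d. coeff f a * s (a + (b + Suc M - e) - d)) = 0" if "b < e" for b
  proof -
    have H: "\<forall>j. d + 1 \<le> j \<and> j \<le> M \<longrightarrow> lcoeff f s M (int d - int j) = 0"
      using f fz unfolding annihilator_def d_def by auto
    have "lcoeff f s M (int d - int (b + Suc M - e)) = 0"
      by (rule H[rule_format]) (use that lt d_def e_def in auto)
    moreover have "lcoeff f s M (int d - int (b + Suc M - e)) =
        (\<Sum>a\<le>d. coeff f a * s (a + (b + Suc M - e) - d))"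
      unfolding d_def by (rule disc_eq) (use lt that e_def in auto)
    ultimately show ?thesis by simp
  qed
  define T where "T = (\<Sum>a\<le>d. \<Sum>b\<le>e. coeff f a * coeff g b * s (a + b + Suc M - d - e))"
  have "T = (\<Sum>a\<le>d. coeff f a * (\<Sum>b\<le>e. coeff g b * s (b + (a + Suc M - d) - e)))"
    unfolding T_def sum_distrib_left
    by (intro sum.cong refl) (use lt in \<open>auto simp: d_def e_def algebra_simps\<close>)
  also have "\<dots> = 0" using A by simp
  finally have T0: "T = 0" .
  have "T = (\<Sum>b\<le>e. coeff g b * (\<Sum>a\<le>d. coeff f a * s (a + (b + Suc M - e) - d)))"
    unfolding T_def sum_distrib_left
    apply (subst sum.swap)
    by (intro sum.cong refl) (use lt in \<open>auto simp: d_def e_def algebra_simps\<close>)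
  also have "\<dots> = coeff g e * (\<Sum>a\<le>d. coeff f a * s (a + (e + Suc M - e) - d))"
  proof -
    have "{..e} = insert e {..<e}" by auto
    then show ?thesis using B by (simp add: sum.insert)
  qed
  also have "\<dots> = coeff g e * Delta f s (Suc M)" unfolding Df by simp
  finally have "T = coeff g e * Delta f s (Suc M)" .
  moreover have "coeff g e \<noteq> 0" using g(2) unfolding e_def by simp
  ultimately show False using T0 f(2) by simp
qed

lemma disc_val:
  assumes "annihilator f s m" "f \<noteq> 0" "degree f < k" "k \<le> Suc m" "Suc m \<le> M"
  shows "lcoeff f s M (int (degree f) - int k) = (if k = Suc m then Delta f s (Suc m) else 0)"
proof (cases "k = Suc m")
  case True
  then show ?thesis unfolding Delta_def using assms
    by (simp add: lcoeff_mindep[of f _ "Suc m" M])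
next
  case False
  then have "k \<le> m" using assms by simp
  then have "lcoeff f s M (int (degree f) - int k) = lcoeff f s m (int (degree f) - int k)"
    using assms by (intro lcoeff_mindep[symmetric]) auto
  also have "\<dots> = 0" using assms \<open>k \<le> m\<close> unfolding annihilator_def by auto
  finally show ?thesis using False by simp
qed

lemma new_poly:
  fixes mu mujp :: "'a::idom poly"
  assumes mu: "mu \<noteq> 0" "annihilator mu s j" "degree mu = L"
    and D: "Delta mu s (Suc j) = \<Delta>" "\<Delta> \<noteq> 0"
    and e: "e = int (Suc j) - 2 * int L" "a = nat (max e 0)" "b = nat (max (- e) 0)"
    and P: "(L = 0 \<and> mujp = [:eps:] \<and> dp = 1) \<or>
       (p < j \<and> mujp \<noteq> 0 \<and> annihilator mujp s p \<and> degree mujp = Lp \<and>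
        int L = int p + 1 - int Lp \<and> Delta mujp s (Suc p) = dp \<and> dp \<noteq> 0)"
    and mu': "mu' = smult dp (monom 1 a * mu) - smult \<Delta> (monom 1 b * mujp)"
  shows "mu' \<noteq> 0 \<and> degree mu' = a + L \<and> annihilator mu' s (Suc j)"
proof -
  define P1 where "P1 = smult dp (monom 1 a * mu)"
  define P2 where "P2 = smult \<Delta> (monom 1 b * mujp)"
  have dp0: "dp \<noteq> 0" using P by auto
  have dP1: "degree P1 = a + L"
    unfolding P1_def using dp0 mu by (simp add: degree_mult_eq degree_monom_eq)
  have dP2: "degree P2 < a + L"
    using P
  proof
    assume H: "L = 0 \<and> mujp = [:eps:] \<and> dp = 1"
    then have "b = 0" "a = Suc j" using e by auto
    then show ?thesis unfolding P2_def using H by simp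
  next
    assume H: "p < j \<and> mujp \<noteq> 0 \<and> annihilator mujp s p \<and> degree mujp = Lp \<and>
        int L = int p + 1 - int Lp \<and> Delta mujp s (Suc p) = dp \<and> dp \<noteq> 0"
    have "degree P2 \<le> b + Lp" unfolding P2_def using H
      by (simp add: degree_mult_eq degree_monom_eq)
    also have "\<dots> < a + L" using H e by linarith
    finally show ?thesis .
  qed
  have eq: "mu' = P1 - P2" unfolding mu' P1_def P2_def ..
  have dmu': "degree mu' = a + L"
    unfolding eq using dP1 dP2
    by (metis degree_add_eq_left degree_minus diff_conv_add_uminus)
  have nz: "mu' \<noteq> 0"
  proof
    assume "mu' = 0"
    then have "P1 = P2" unfolding eq by simp
    then show False using dP1 dP2 by simp
  qed
  have ann: "annihilator mu' s (Suc j)"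
    unfolding annihilator_def dmu'
  proof (rule disjI2, intro allI impI)
    fix k assume k: "a + L + 1 \<le> k \<and> k \<le> Suc j"
    have lin: "lcoeff mu' s (Suc j) (int (a + L) - int k) =
      dp * lcoeff mu s (Suc j) (int L - int k) - \<Delta> * lcoeff mujp s (Suc j) (int (a + L) - int k - int b)"
      unfolding mu' lcoeff_diff lcoeff_smult lcoeff_shift by simp
    have X1: "lcoeff mu s (Suc j) (int L - int k) = (if k = Suc j then \<Delta> else 0)"
      using disc_val[OF mu(2) mu(1), of k "Suc j"] k mu(3) D by auto
    show "lcoeff mu' s (Suc j) (int (a + L) - int k) = 0"
      using P
    proof
      assume H: "L = 0 \<and> mujp = [:eps:] \<and> dp = 1"
      then have "a = Suc j" using e by auto
      then show ?thesis using k by simp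
    next
      assume H: "p < j \<and> mujp \<noteq> 0 \<and> annihilator mujp s p \<and> degree mujp = Lp \<and>
        int L = int p + 1 - int Lp \<and> Delta mujp s (Suc p) = dp \<and> dp \<noteq> 0"
      define k' where "k' = nat (int k - int j + int p)"
      have k'1: "int k' = int k - int j + int p" unfolding k'_def using H e k by linarith
      have ix: "int (a + L) - int k - int b = int Lp - int k'" using k'1 H e by linarith
      have k'2: "Lp < k'" "k' \<le> Suc p" using k'1 H e k by linarith+
      have X2: "lcoeff mujp s (Suc j) (int Lp - int k') = (if k' = Suc p then dp else 0)"
        using disc_val[of mujp s p k' "Suc j"] H k'2 by auto
      have iff: "k' = Suc p \<longleftrightarrow> k = Suc j" using k'1 by linarith
      show ?thesis unfolding lin X1 ix X2 using iff by (simp add: mult.commute)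
    qed
  qed
  show ?thesis using nz dmu' ann by simp
qed

definition Inv :: "'a::idom \<Rightarrow> (nat \<Rightarrow> 'a) \<Rightarrow> nat \<Rightarrow> bool" where
  "Inv eps s j = (case lfsr_state eps s j of (u, jp, w, dp) \<Rightarrow>
     u \<noteq> 0 \<and> annihilator u s j \<and> degree u = LC s j \<and> -1 \<le> jp \<and> jp < int j \<and>
     int (LC s j) = jp + 1 - LCi s jp \<and>
     (jp = -1 \<longrightarrow> w = [:eps:] \<and> dp = 1) \<and>
     (0 \<le> jp \<longrightarrow> w \<noteq> 0 \<and> annihilator w s (nat jp) \<and> degree w = LC s (nat jp) \<and>
        Delta w s (Suc (nat jp)) = dp \<and> dp \<noteq> 0))"

lemma LC_0: "LC s 0 = 0"
proof -
  have "annihilator (1::'a::idom poly) s 0" by (simp add: annihilator_def)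
  from LC_le[OF _ this] show ?thesis by simp
qed

lemma Inv_0: "Inv eps s 0"
  unfolding Inv_def by (simp add: LC_0 LCi_def annihilator_def)

lemma LC_step:
  assumes "u' \<noteq> 0" "annihilator u' s (Suc j)" "degree u' = a + L"
    and "L = LC s j" and u: "u \<noteq> 0" "annihilator u s j" "degree u = L"
    and lb: "\<Delta> \<noteq> 0 \<Longrightarrow> a + L \<le> max L (Suc j - L)" "Delta u s (Suc j) = \<Delta>"
    and a0: "\<Delta> = 0 \<Longrightarrow> a = 0"
  shows "LC s (Suc j) = a + L"
proof (rule antisym)
  show "LC s (Suc j) \<le> a + L" using LC_le[OF assms(1,2)] assms(3) by simp
  obtain g where g: "g \<noteq> 0" "degree g = LC s (Suc j)" "annihilator g s (Suc j)"
    using LC_ex by blast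
  have 1: "L \<le> degree g" using LC_le[OF g(1) annih_mono[OF g(3)]] assms(4) by simp
  show "a + L \<le> LC s (Suc j)"
  proof (cases "\<Delta> = 0")
    case True then show ?thesis using 1 g a0 by simp
  next
    case False
    have "Suc j \<le> L + degree g" using massey[OF u(2) _ g(3) g(1)] lb(2) False u(3) by simp
    then show ?thesis using 1 g lb(1)[OF False] by simp
  qed
qed

lemma Inv_Suc:
  assumes "Inv eps s j" shows "Inv eps s (Suc j)"
proof -
  obtain u jp w dp where st: "lfsr_state eps s j = (u, jp, w, dp)"
    by (cases "lfsr_state eps s j") auto
  have I: "u \<noteq> 0" "annihilator u s j" "degree u = LC s j" "-1 \<le> jp" "jp < int j"
     "int (LC s j) = jp + 1 - LCi s jp"
     "jp = -1 \<Longrightarrow> w = [:eps:] \<and> dp = 1"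
     "0 \<le> jp \<Longrightarrow> w \<noteq> 0 \<and> annihilator w s (nat jp) \<and> degree w = LC s (nat jp) \<and>
        Delta w s (Suc (nat jp)) = dp \<and> dp \<noteq> 0"
    using assms st unfolding Inv_def by auto
  define L where "L = LC s j"
  define \<Delta> where "\<Delta> = Delta u s (Suc j)"
  define e where "e = int (Suc j) - 2 * int (degree u)"
  define a where "a = nat (max e 0)"
  define b where "b = nat (max (- e) 0)"
  define u' where "u' = (if \<Delta> = 0 then u
                else smult dp (monom 1 a * u) - smult \<Delta> (monom 1 b * w))"
  define keep where "keep = (\<Delta> = 0 \<or> e \<le> 0)"
  have st': "lfsr_state eps s (Suc j) = (u', (if keep then jp else int j), (if keep then w else u),
         (if keep then dp else \<Delta>))"
    by (simp add: st Let_def u'_def keep_def \<Delta>_def e_def a_def b_def)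
  have new: "u' \<noteq> 0 \<and> annihilator u' s (Suc j) \<and> degree u' = LC s (Suc j) \<and>
     LC s (Suc j) = (if \<Delta> = 0 then L else a + L)"
  proof (cases "\<Delta> = 0")
    case True
    have ann: "annihilator u s (Suc j)"
      unfolding annihilator_def
    proof (rule disjI2, intro allI impI)
      fix k assume k: "degree u + 1 \<le> k \<and> k \<le> Suc j"
      show "lcoeff u s (Suc j) (int (degree u) - int k) = 0"
        using disc_val[OF I(2) I(1), of k "Suc j"] k True \<Delta>_def by auto
    qed
    have "LC s (Suc j) = 0 + L"
      by (rule LC_step[of u s j 0 L u 0]) (use True I ann L_def \<Delta>_def in auto)
    then show ?thesis using ann True I L_def u'_def by simp
  next
    case False
    have P: "(L = 0 \<and> w = [:eps:] \<and> dp = 1) \<or>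
       (nat jp < j \<and> w \<noteq> 0 \<and> annihilator w s (nat jp) \<and> degree w = LC s (nat jp) \<and>
        int L = int (nat jp) + 1 - int (LC s (nat jp)) \<and> Delta w s (Suc (nat jp)) = dp \<and> dp \<noteq> 0)"
    proof (cases "jp = -1")
      case True then show ?thesis using I L_def by (simp add: LCi_def)
    next
      case False
      then have "0 \<le> jp" using I by simp
      then show ?thesis using I L_def by (auto simp: LCi_def)
    qed
    have np: "u' \<noteq> 0 \<and> degree u' = a + L \<and> annihilator u' s (Suc j)"
      by (rule new_poly[OF I(1,2) _ \<Delta>_def[symmetric] False _ a_def b_def P])
         (use I L_def e_def False u'_def in auto)
    have "LC s (Suc j) = a + L"
      by (rule LC_step[of u' s j a L u \<Delta>]) (use np False I L_def \<Delta>_def e_def a_def in auto)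
    then show ?thesis using np False by simp
  qed
  show ?thesis
  proof (cases keep)
    case True
    have "int (LC s (Suc j)) = jp + 1 - LCi s jp"
      using new True I(6) L_def unfolding keep_def a_def by auto
    then show ?thesis unfolding Inv_def st' using True new I by auto
  next
    case False
    then have F: "\<Delta> \<noteq> 0" "e > 0" unfolding keep_def by auto
    have "int (LC s (Suc j)) = int j + 1 - LCi s (int j)"
      using new F L_def I(3) unfolding a_def e_def LCi_def by auto
    then show ?thesis unfolding Inv_def st' using False new I F \<Delta>_def by (auto simp: L_def)
  qed
qed

lemma Inv_all: "Inv eps s j"
  by (induction j) (auto intro: Inv_0 Inv_Suc)

theorem mainTheorem6:
  fixes eps :: "'a::idom" and s :: "nat \<Rightarrow> 'a" and n :: nat
  assumes "n \<ge> 1"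
  shows "int (LC s n) = jprime eps s n + 1 - LCi s (jprime eps s n)"
  using Inv_all[of eps s n] unfolding Inv_def jprime_def
  by (auto split: prod.splits)

end
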